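(* For every $\ell\ge 3$ there exists an $\ell$-core whose classes have total size at most $2\ell+1$, each class having size at most $3$ (and at least $1$). More precisely, there exist $\ell$-cores of the following types: $(1,2,\dots,2,1)$ if $\ell\equiv 1\pmod 4$; $(2,\dots,2,1)$ if $\ell\equiv 0\pmod 4$; $(2,\dots,2)$ if $\ell\equiv 3\pmod 4$; $(2,2,3,2,\dots,2)$ if $\ell\equiv 2\pmod 4$.
   Context: For $p\ge 3$, a $p$-core of type $(x_1,\dots,x_p)$ consists of pairwise disjoint finite sets $C_1,\dots,C_p$ (the classes) with $|C_i|=x_i$, together with sets $B_1,\dots,B_p\subseteq C_1\cup\dots\cup C_p$ such that $B_1\cup\dots\cup B_p=C_1\cup\dots\cup C_p$, and: (i) $B_i\cap C_i=\emptyset$ and $|B_i\cap C_j|=1$ for all $j\ne i$ (so $|B_i|=p-1$); (ii) $|B_i\cap B_j|+p$ is odd for all $1\le i,j\le p$. *)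

theory Defs
  imports Main
begin

text \<open>A p-core of type x (classes and sets indexed by 1..p, elements are natural numbers).
  C i is the i-th class, B i the i-th set.\<close>
definition is_core :: "nat \<Rightarrow> (nat \<Rightarrow> nat) \<Rightarrow> (nat \<Rightarrow> nat set) \<Rightarrow> (nat \<Rightarrow> nat set) \<Rightarrow> bool" where
  "is_core p x C B \<longleftrightarrow>
     p \<ge> 3 \<and>
     (\<forall>i\<in>{1..p}. finite (C i) \<and> card (C i) = x i) \<and>
     (\<forall>i\<in>{1..p}. \<forall>j\<in>{1..p}. i \<noteq> j \<longrightarrow> C i \<inter> C j = {}) \<and>
     (\<forall>i\<in>{1..p}. B i \<subseteq> (\<Union>j\<in>{1..p}. C j)) \<and>
     (\<Union>i\<in>{1..p}. B i) = (\<Union>j\<in>{1..p}. C j) \<and>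
     (\<forall>i\<in>{1..p}. B i \<inter> C i = {} \<and> (\<forall>j\<in>{1..p}. j \<noteq> i \<longrightarrow> card (B i \<inter> C j) = 1)) \<and>
     (\<forall>i\<in>{1..p}. \<forall>j\<in>{1..p}. odd (card (B i \<inter> B j) + p))"

end

theory Submission imports Defs begin

lemma par_card:
  fixes a b :: "nat \<Rightarrow> nat"
  assumes "finite S" "\<forall>k\<in>S. a k \<le> 2" "\<forall>k\<in>S. b k \<le> 2"
  shows "even (card {k\<in>S. a k = b k}) \<longleftrightarrow>
         even (card S + sum a S + sum b S + card {k\<in>S. a k + b k = 2 \<and> a k \<noteq> b k})"
  using assms
proof (induction S rule: finite_induct)
  case empty
  then show ?case by simp
next
  case (insert x F)
  have f1: "finite {k\<in>F. a k = b k}" "finite {k\<in>F. a k + b k = 2 \<and> a k \<noteq> b k}"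
    using insert by auto
  have e1: "{k\<in>insert x F. a k = b k} = (if a x = b x then insert x {k\<in>F. a k = b k} else {k\<in>F. a k = b k})"
    by auto
  have e2: "{k\<in>insert x F. a k + b k = 2 \<and> a k \<noteq> b k} = (if a x + b x = 2 \<and> a x \<noteq> b x then insert x {k\<in>F. a k + b k = 2 \<and> a k \<noteq> b k} else {k\<in>F. a k + b k = 2 \<and> a k \<noteq> b k})"
    by auto
  have IH: "even (card {k\<in>F. a k = b k}) \<longleftrightarrow>
         even (card F + sum a F + sum b F + card {k\<in>F. a k + b k = 2 \<and> a k \<noteq> b k})"
    using insert by auto
  have ax: "a x \<le> 2" "b x \<le> 2" using insert by auto
  show ?case
  proof -
    have "a x = 0 \<or> a x = 1 \<or> a x = 2" "b x = 0 \<or> b x = 1 \<or> b x = 2" using ax by auto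
    then show ?thesis unfolding e1 e2 using insert(1,2) f1 IH
      by (elim disjE) (simp_all add: card_insert_if)
  qed
qed

lemma par_pair:
  fixes f :: "nat \<Rightarrow> nat \<Rightarrow> nat"
  assumes ij: "i\<in>{1..p}" "j\<in>{1..p}" "i\<noteq>j" and b: "\<forall>k. f i k \<le> 2" "\<forall>k. f j k \<le> 2"
  shows "even (card {k\<in>{1..p}. k\<noteq>i \<and> k\<noteq>j \<and> f i k = f j k}) \<longleftrightarrow>
    even (p + sum (f i) {1..p} + f i i + f i j + sum (f j) {1..p} + f j i + f j j
      + card {k\<in>{1..p}-{i,j}. f i k + f j k = 2 \<and> f i k \<noteq> f j k})"
proof -
  define S where "S = {1..p} - {i,j}"
  have fS: "finite S" unfolding S_def by auto
  have e: "{k\<in>{1..p}. k\<noteq>i \<and> k\<noteq>j \<and> f i k = f j k} = {k\<in>S. f i k = f j k}"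
    unfolding S_def by auto
  have p2: "p \<ge> 2" using ij by auto
  have "card S = card {1..p} - card {i,j}" unfolding S_def using ij by (intro card_Diff_subset) auto
  then have cS: "card S + 2 = p" using ij p2 by (simp add: card_insert_if) linarith
  have s1: "sum g {1..p} = sum g S + g i + g j" for g :: "nat \<Rightarrow> nat"
  proof -
    have "sum g {1..p} = g i + sum g ({1..p} - {i})" using ij by (simp add: sum.remove)
    also have "sum g ({1..p} - {i}) = g j + sum g ({1..p} - {i} - {j})" using ij by (simp add: sum.remove)
    also have "{1..p} - {i} - {j} = S" unfolding S_def by auto
    finally show ?thesis by simp
  qed
  have H: "even (card {k\<in>S. f i k = f j k}) \<longleftrightarrow>
         even (card S + sum (f i) S + sum (f j) S + card {k\<in>S. f i k + f j k = 2 \<and> f i k \<noteq> f j k})"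
    using par_card[OF fS, of "f i" "f j"] b by auto
  have Xeq: "p + sum (f i) {1..p} + f i i + f i j + sum (f j) {1..p} + f j i + f j j
      + card {k\<in>S. f i k + f j k = 2 \<and> f i k \<noteq> f j k}
     = (card S + sum (f i) S + sum (f j) S + card {k\<in>S. f i k + f j k = 2 \<and> f i k \<noteq> f j k})
       + 2 * (f i i + f i j + f j i + f j j + 1)"
    using s1[of "f i"] s1[of "f j"] cS by simp
  have E2: "even (X + 2*c) = even X" for X c :: nat by simp
  show ?thesis unfolding e S_def[symmetric] Xeq E2 by (rule H)
qed

definition CC :: "(nat \<Rightarrow> nat) \<Rightarrow> nat \<Rightarrow> nat set" where
  "CC x k = (\<lambda>v. 3*k+v) ` {..<x k}"
definition BB :: "nat \<Rightarrow> (nat \<Rightarrow> nat \<Rightarrow> nat) \<Rightarrow> nat \<Rightarrow> nat set" where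
  "BB p f i = (\<lambda>k. 3*k + f i k) ` ({1..p} - {i})"

lemma enc_inj: "(a::nat) < 3 \<Longrightarrow> b < 3 \<Longrightarrow> 3*k+a = 3*l+b \<Longrightarrow> k = l \<and> a = b"
  by presburger

lemma core_from_f:
  fixes f :: "nat \<Rightarrow> nat \<Rightarrow> nat"
  assumes p3: "p \<ge> 3" and x3: "\<forall>k\<in>{1..p}. x k \<le> 3"
    and rng: "\<forall>i\<in>{1..p}. \<forall>k\<in>{1..p}. k\<noteq>i \<longrightarrow> f i k < x k"
    and cov: "\<forall>k\<in>{1..p}. \<forall>v<x k. \<exists>i\<in>{1..p}. i\<noteq>k \<and> f i k = v"
    and par: "\<forall>i\<in>{1..p}. \<forall>j\<in>{1..p}. i\<noteq>j \<longrightarrow> odd (card {k\<in>{1..p}. k\<noteq>i \<and> k\<noteq>j \<and> f i k = f j k} + p)"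
  shows "is_core p x (CC x) (BB p f)"
proof -
  have f3: "f i k < 3" if "i\<in>{1..p}" "k\<in>{1..p}" "k\<noteq>i" for i k
    using rng x3 that by fastforce
  have injC: "inj_on (\<lambda>v::nat. 3*k+v) A" for k A by (auto intro: inj_onI)
  have injB: "inj_on (\<lambda>k. 3*k + f i k) A" if "i\<in>{1..p}" "A \<subseteq> {1..p} - {i}" for i A
  proof (rule inj_onI)
    fix a b assume "a \<in> A" "b \<in> A" "3*a + f i a = 3*b + f i b"
    moreover have "a \<in> {1..p}" "a \<noteq> i" "b \<in> {1..p}" "b \<noteq> i" using that \<open>a\<in>A\<close> \<open>b\<in>A\<close> by auto
    ultimately show "a = b" using enc_inj[of "f i a" "f i b" a b] f3[of i a] f3[of i b] that by auto
  qed
  have c1: "\<forall>i\<in>{1..p}. finite (CC x i) \<and> card (CC x i) = x i"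
    unfolding CC_def using injC by (simp add: card_image)
  have c2: "\<forall>i\<in>{1..p}. \<forall>j\<in>{1..p}. i \<noteq> j \<longrightarrow> CC x i \<inter> CC x j = {}"
  proof (intro ballI impI)
    fix i j assume "i\<in>{1..p}" "j\<in>{1..p}" "i\<noteq>j"
    have xb: "x i \<le> 3" "x j \<le> 3" using x3 \<open>i\<in>{1..p}\<close> \<open>j\<in>{1..p}\<close> by auto
    show "CC x i \<inter> CC x j = {}"
    proof (rule ccontr)
      assume "CC x i \<inter> CC x j \<noteq> {}"
      then obtain v w where "v < x i" "w < x j" "3*i+v = 3*j+w" unfolding CC_def by auto
      then show False using enc_inj[of v w i j] xb \<open>i\<noteq>j\<close> by linarith
    qed
  qed
  have c3: "\<forall>i\<in>{1..p}. BB p f i \<subseteq> (\<Union>j\<in>{1..p}. CC x j)"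
  proof (intro ballI subsetI)
    fix i y assume i: "i\<in>{1..p}" and y: "y \<in> BB p f i"
    obtain k where k: "k\<in>{1..p}" "k\<noteq>i" "y = 3*k + f i k" using y unfolding BB_def by blast
    then have "y \<in> CC x k" unfolding CC_def using rng i by auto
    then show "y \<in> (\<Union>j\<in>{1..p}. CC x j)" using k by auto
  qed
  have c4: "(\<Union>i\<in>{1..p}. BB p f i) = (\<Union>j\<in>{1..p}. CC x j)"
  proof
    show "(\<Union>i\<in>{1..p}. BB p f i) \<subseteq> (\<Union>j\<in>{1..p}. CC x j)" using c3 by auto
    show "(\<Union>j\<in>{1..p}. CC x j) \<subseteq> (\<Union>i\<in>{1..p}. BB p f i)"
    proof
      fix y assume "y \<in> (\<Union>j\<in>{1..p}. CC x j)"
      then obtain k v where k: "k\<in>{1..p}" "v < x k" "y = 3*k+v" unfolding CC_def by auto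
      then obtain i where i: "i\<in>{1..p}" "i\<noteq>k" "f i k = v" using cov by blast
      then have "y \<in> BB p f i" unfolding BB_def using k by auto
      then show "y \<in> (\<Union>i\<in>{1..p}. BB p f i)" using i by auto
    qed
  qed
  have c5: "\<forall>i\<in>{1..p}. BB p f i \<inter> CC x i = {} \<and> (\<forall>j\<in>{1..p}. j \<noteq> i \<longrightarrow> card (BB p f i \<inter> CC x j) = 1)"
  proof (intro ballI conjI impI allI)
    fix i assume i: "i\<in>{1..p}"
    show "BB p f i \<inter> CC x i = {}"
    proof (rule ccontr)
      assume "BB p f i \<inter> CC x i \<noteq> {}"
      then obtain y where "y \<in> BB p f i" "y \<in> CC x i" by blast
      then obtain k v where kv: "k \<in> {1..p}" "k\<noteq>i" "v < x i" "3*k + f i k = 3*i + v"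
        unfolding BB_def CC_def by blast
      have "x i \<le> 3" using x3 i by auto
      moreover have "f i k < 3" using f3[of i k] kv i by auto
      ultimately have "k = i" using enc_inj[of "f i k" v k i] kv by linarith
      then show False using kv by simp
    qed
    fix j assume j: "j\<in>{1..p}" "j\<noteq>i"
    have "BB p f i \<inter> CC x j = {3*j + f i j}"
    proof
      show "{3*j + f i j} \<subseteq> BB p f i \<inter> CC x j" unfolding BB_def CC_def using rng i j by auto
      show "BB p f i \<inter> CC x j \<subseteq> {3*j + f i j}"
      proof
        fix y assume "y \<in> BB p f i \<inter> CC x j"
        then obtain k v where kv: "k \<in> {1..p}" "k\<noteq>i" "v < x j" "y = 3*k + f i k" "3*k + f i k = 3*j + v"
          unfolding BB_def CC_def by blast
        have "x j \<le> 3" using x3 j by auto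
        moreover have "f i k < 3" using f3[of i k] kv i by auto
        ultimately have "k = j" using enc_inj[of "f i k" v k j] kv by linarith
        then show "y \<in> {3*j + f i j}" using kv by simp
      qed
    qed
    then show "card (BB p f i \<inter> CC x j) = 1" by simp
  qed
  have c6: "\<forall>i\<in>{1..p}. \<forall>j\<in>{1..p}. odd (card (BB p f i \<inter> BB p f j) + p)"
  proof (intro ballI)
    fix i j assume i: "i\<in>{1..p}" and j: "j\<in>{1..p}"
    show "odd (card (BB p f i \<inter> BB p f j) + p)"
    proof (cases "i = j")
      case True
      have "card (BB p f i) = card ({1..p} - {i})" unfolding BB_def
        using injB[OF i, of "{1..p} - {i}"] by (simp add: card_image)
      also have "\<dots> = p - 1" using i by simp
      finally have "card (BB p f i) = p - 1" .
      then show ?thesis using True p3 by simp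
    next
      case False
      have "BB p f i \<inter> BB p f j = (\<lambda>k. 3*k + f i k) ` {k\<in>{1..p}. k\<noteq>i \<and> k\<noteq>j \<and> f i k = f j k}"
      proof
        show "BB p f i \<inter> BB p f j \<subseteq> (\<lambda>k. 3*k + f i k) ` {k\<in>{1..p}. k\<noteq>i \<and> k\<noteq>j \<and> f i k = f j k}"
        proof
          fix y assume "y \<in> BB p f i \<inter> BB p f j"
          then obtain k l where kl: "k\<in>{1..p}" "k\<noteq>i" "l\<in>{1..p}" "l\<noteq>j" "y = 3*k + f i k" "3*k + f i k = 3*l + f j l"
            unfolding BB_def by blast
          have "f i k < 3" using f3[of i k] kl i by auto
          moreover have "f j l < 3" using f3[of j l] kl j by auto
          ultimately have "k = l \<and> f i k = f j l" using enc_inj[of "f i k" "f j l" k l] kl by blast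
          then show "y \<in> (\<lambda>k. 3*k + f i k) ` {k\<in>{1..p}. k\<noteq>i \<and> k\<noteq>j \<and> f i k = f j k}"
            using kl by auto
        qed
        show "(\<lambda>k. 3*k + f i k) ` {k\<in>{1..p}. k\<noteq>i \<and> k\<noteq>j \<and> f i k = f j k} \<subseteq> BB p f i \<inter> BB p f j"
          unfolding BB_def by force
      qed
      moreover have "card ((\<lambda>k. 3*k + f i k) ` {k\<in>{1..p}. k\<noteq>i \<and> k\<noteq>j \<and> f i k = f j k})
          = card {k\<in>{1..p}. k\<noteq>i \<and> k\<noteq>j \<and> f i k = f j k}"
        by (rule card_image, rule injB[OF i]) auto
      ultimately show ?thesis using par i j False by simp
    qed
  qed
  show ?thesis unfolding is_core_def using p3 c1 c2 c3 c4 c5 c6 by blast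
qed


lemma sum_mod2: "even (\<Sum>k\<in>A. (g k::nat) mod 2) \<longleftrightarrow> even (\<Sum>k\<in>A. g k)"
  by (metis even_iff_mod_2_eq_zero mod_sum_eq)

lemma even_sum_Icc: "even (\<Sum>{1..n::nat}) \<longleftrightarrow> n mod 4 = 0 \<or> n mod 4 = 3"
proof (induction n)
  case 0 then show ?case by simp
next
  case (Suc n)
  have "\<Sum>{1..Suc n} = \<Sum>{1..n} + Suc n" by simp
  then show ?case using Suc by simp presburger
qed

lemma card_lt: "i \<le> Suc p \<Longrightarrow> card ({1..p} \<inter> {k. k < i}) = i - 1"
proof -
  assume "i \<le> Suc p"
  then have "{1..p} \<inter> {k. k < i} = {1..<i}" by auto
  then show ?thesis by simp
qed

definition fA :: "nat \<Rightarrow> nat \<Rightarrow> nat" where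
  "fA i k = (i + of_bool (k < i)) mod 2"

lemma rowA: assumes "i \<in> {1..p}" "odd p" shows "odd (\<Sum>k\<in>{1..p}. fA i k)"
proof -
  have "(\<Sum>k\<in>{1..p}. i + of_bool (k < i)) = p * i + (i - 1)"
    using card_lt[of i p] assms by (simp add: sum.distrib)
  moreover have "odd (p * i + (i - 1))" using assms by (cases i) auto
  ultimately show ?thesis unfolding fA_def using sum_mod2[of "\<lambda>k. i + of_bool (k < i)" "{1..p}"] by simp
qed

lemma caseA: assumes "p \<ge> 3" "odd p" shows "is_core p (\<lambda>i. 2) (CC (\<lambda>i. 2)) (BB p fA)"
proof (rule core_from_f)
  show "p \<ge> 3" by fact
  show "\<forall>k\<in>{1..p}. (2::nat) \<le> 3" by simp
  show "\<forall>i\<in>{1..p}. \<forall>k\<in>{1..p}. k \<noteq> i \<longrightarrow> fA i k < 2" unfolding fA_def by simp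
  show "\<forall>k\<in>{1..p}. \<forall>v<2. \<exists>i\<in>{1..p}. i \<noteq> k \<and> fA i k = v"
  proof (intro ballI allI impI)
    fix k v assume k: "k \<in> {1..p}" and v: "v < (2::nat)"
    have "k = 1 \<or> k = 2 \<or> k \<ge> 3" using k by auto
    moreover have "v = 0 \<or> v = 1" using v by auto
    ultimately show "\<exists>i\<in>{1..p}. i \<noteq> k \<and> fA i k = v"
    proof (elim disjE)
      assume "k = 1" "v = 0" then show ?thesis using assms by (intro bexI[of _ 3]) (auto simp: fA_def)
    next
      assume "k = 1" "v = 1" then show ?thesis using assms by (intro bexI[of _ 2]) (auto simp: fA_def)
    next
      assume "k = 2" "v = 0" then show ?thesis using assms by (intro bexI[of _ 3]) (auto simp: fA_def)
    next
      assume "k = 2" "v = 1" then show ?thesis using assms by (intro bexI[of _ 1]) (auto simp: fA_def)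
    next
      assume "k \<ge> 3" "v = 0" then show ?thesis using assms by (intro bexI[of _ 2]) (auto simp: fA_def)
    next
      assume "k \<ge> 3" "v = 1" then show ?thesis using assms by (intro bexI[of _ 1]) (auto simp: fA_def)
    qed
  qed
  show "\<forall>i\<in>{1..p}. \<forall>j\<in>{1..p}. i \<noteq> j \<longrightarrow> odd (card {k \<in> {1..p}. k \<noteq> i \<and> k \<noteq> j \<and> fA i k = fA j k} + p)"
  proof (intro ballI impI)
    fix i j assume i: "i \<in> {1..p}" and j: "j \<in> {1..p}" and ij: "i \<noteq> j"
    have b: "\<forall>k. fA i k \<le> 2" "\<forall>k. fA j k \<le> 2" unfolding fA_def by auto
    have E: "{k\<in>{1..p}-{i,j}. fA i k + fA j k = 2 \<and> fA i k \<noteq> fA j k} = {}"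
      unfolding fA_def by auto
    have ri: "odd (\<Sum>k\<in>{1..p}. fA i k)" "odd (\<Sum>k\<in>{1..p}. fA j k)" using rowA assms i j by auto
    have "even (card {k \<in> {1..p}. k \<noteq> i \<and> k \<noteq> j \<and> fA i k = fA j k})"
      unfolding par_pair[OF i j ij b] E using ri assms ij
      by (cases "i < j") (auto simp: fA_def)
    then show "odd (card {k \<in> {1..p}. k \<noteq> i \<and> k \<noteq> j \<and> fA i k = fA j k} + p)" using assms by simp
  qed
qed


lemma Suc_mod2_even: "even (n::nat) \<Longrightarrow> Suc n mod 2 = 1" by presburger

definition fB :: "nat \<Rightarrow> nat \<Rightarrow> nat \<Rightarrow> nat" where
  "fB p i k = (if k = p then 0 else (of_bool (k < i) + i * k) mod 2)"

lemma rowB: assumes "i \<in> {1..p}" "p mod 4 = 0" shows "even (\<Sum>k\<in>{1..p}. fB p i k) \<longleftrightarrow> odd i"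
proof -
  have p1: "p \<ge> 1" using assms by auto
  have s: "{1..p} = insert p {1..<p}" using p1 by auto
  have "(\<Sum>k\<in>{1..p}. fB p i k) = (\<Sum>k\<in>{1..<p}. (of_bool (k < i) + i * k) mod 2)"
    unfolding s by (simp add: fB_def)
  moreover have "{1..<p} \<inter> {k. k < i} = {1..<i}" using assms by auto
  then have "(\<Sum>k\<in>{1..<p}. of_bool (k < i) + i * k) = (i - 1) + i * (\<Sum>{1..<p})"
    by (simp add: sum.distrib sum_distrib_left)
  moreover have "even (\<Sum>{1..<p})"
  proof -
    have "\<Sum>{1..p} = \<Sum>{1..<p} + p" unfolding s by simp
    moreover have "even (\<Sum>{1..p})" using even_sum_Icc[of p] assms by simp
    moreover have "even p" using assms by presburger
    ultimately show ?thesis by simp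
  qed
  ultimately show ?thesis using sum_mod2[of "\<lambda>k. of_bool (k < i) + i * k" "{1..<p}"] assms
    by (cases i) auto
qed

lemma caseB: assumes "p \<ge> 3" "p mod 4 = 0"
  shows "is_core p (\<lambda>i. if i = p then 1 else 2) (CC (\<lambda>i. if i = p then 1 else 2)) (BB p (fB p))"
proof (rule core_from_f)
  have p4: "p \<ge> 4" and ev: "even p" using assms by presburger+
  show "p \<ge> 3" by fact
  show "\<forall>k\<in>{1..p}. (if k = p then 1 else 2::nat) \<le> 3" by simp
  show "\<forall>i\<in>{1..p}. \<forall>k\<in>{1..p}. k \<noteq> i \<longrightarrow> fB p i k < (if k = p then 1 else 2)" unfolding fB_def by simp
  show "\<forall>k\<in>{1..p}. \<forall>v<(if k = p then 1 else 2). \<exists>i\<in>{1..p}. i \<noteq> k \<and> fB p i k = v"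
  proof (intro ballI allI impI)
    fix k v assume k: "k \<in> {1..p}" and v: "v < (if k = p then 1 else 2::nat)"
    have "k = p \<and> v = 0 \<or> k < p \<and> v = 1 \<or> k = 1 \<and> v = 0 \<or> k = 2 \<and> v = 0 \<or> 3 \<le> k \<and> k < p \<and> v = 0"
      using k v by (cases "k = p") auto
    then show "\<exists>i\<in>{1..p}. i \<noteq> k \<and> fB p i k = v"
    proof (elim disjE)
      assume "k = p \<and> v = 0" then show ?thesis using p4 by (intro bexI[of _ 1]) (auto simp: fB_def)
    next
      assume "k < p \<and> v = 1" then show ?thesis using p4 ev k by (intro bexI[of _ p]) (auto simp: fB_def Suc_mod2_even)
    next
      assume "k = 1 \<and> v = 0" then show ?thesis using p4 by (intro bexI[of _ 3]) (auto simp: fB_def)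
    next
      assume "k = 2 \<and> v = 0" then show ?thesis using p4 by (intro bexI[of _ 1]) (auto simp: fB_def)
    next
      assume "3 \<le> k \<and> k < p \<and> v = 0" then show ?thesis using p4 by (intro bexI[of _ 2]) (auto simp: fB_def)
    qed
  qed
  show "\<forall>i\<in>{1..p}. \<forall>j\<in>{1..p}. i \<noteq> j \<longrightarrow> odd (card {k \<in> {1..p}. k \<noteq> i \<and> k \<noteq> j \<and> fB p i k = fB p j k} + p)"
  proof (intro ballI impI)
    fix i j assume i: "i \<in> {1..p}" and j: "j \<in> {1..p}" and ij: "i \<noteq> j"
    have b: "\<forall>k. fB p i k \<le> 2" "\<forall>k. fB p j k \<le> 2" unfolding fB_def by auto
    have E: "{k\<in>{1..p}-{i,j}. fB p i k + fB p j k = 2 \<and> fB p i k \<noteq> fB p j k} = {}"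
      unfolding fB_def by auto
    have ri: "even (\<Sum>k\<in>{1..p}. fB p i k) \<longleftrightarrow> odd i" "even (\<Sum>k\<in>{1..p}. fB p j k) \<longleftrightarrow> odd j"
      using rowB assms i j by auto
    have "odd (card {k \<in> {1..p}. k \<noteq> i \<and> k \<noteq> j \<and> fB p i k = fB p j k})"
      unfolding par_pair[OF i j ij b] E using ri ev ij i j
      by (cases "i < j") (auto simp: fB_def)
    then show "odd (card {k \<in> {1..p}. k \<noteq> i \<and> k \<noteq> j \<and> fB p i k = fB p j k} + p)" using ev by simp
  qed
qed


definition fC :: "nat \<Rightarrow> nat \<Rightarrow> nat \<Rightarrow> nat" where
  "fC p i k = (if k = 1 \<or> k = p then 0 else (of_bool (k < i) + i * k + i) mod 2)"

lemma rowC: assumes "i \<in> {1..p}" "p mod 4 = 1" "p \<ge> 5" shows "even (\<Sum>k\<in>{1..p}. fC p i k) \<longleftrightarrow> even (i - 2)"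
proof -
  have s: "{1..p} = insert 1 (insert p {2..<p})" using assms by auto
  have "(\<Sum>k\<in>{1..p}. fC p i k) = (\<Sum>k\<in>{2..<p}. (of_bool (k < i) + i * k + i) mod 2)"
    unfolding s using assms by (simp add: fC_def)
  moreover have "{2..<p} \<inter> {k. k < i} = {2..<i}" using assms by auto
  then have "(\<Sum>k\<in>{2..<p}. of_bool (k < i) + i * k + i) = (i - 2) + i * (\<Sum>{2..<p}) + i * (p - 2)"
    by (simp add: sum.distrib sum_distrib_left)
  moreover have "odd (\<Sum>{2..<p})"
  proof -
    have "\<Sum>{1..p} = \<Sum>{2..<p} + 1 + p" unfolding s using assms by simp
    moreover have "odd (\<Sum>{1..p})" using even_sum_Icc[of p] assms by simp
    moreover have "odd p" using assms by presburger
    ultimately show ?thesis by simp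
  qed
  moreover have "odd (p - 2)" using assms by presburger
  ultimately show ?thesis using sum_mod2[of "\<lambda>k. of_bool (k < i) + i * k + i" "{2..<p}"] assms
    by auto
qed

lemma oddp_mod: "odd (p::nat) \<Longrightarrow> (1 + p * k + p) mod 2 = k mod 2"
proof -
  assume "odd p"
  then obtain q where "p = 2*q+1" by (elim oddE)
  then have "1 + p * k + p = k + 2 * (q*k + q + 1)" by (simp add: algebra_simps)
  then show ?thesis by (metis mod_mult_self2)
qed

lemma caseC: assumes "p \<ge> 3" "p mod 4 = 1"
  shows "is_core p (\<lambda>i. if i = 1 \<or> i = p then 1 else 2) (CC (\<lambda>i. if i = 1 \<or> i = p then 1 else 2)) (BB p (fC p))"
proof (rule core_from_f)
  have p5: "p \<ge> 5" and od: "odd p" using assms by presburger+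
  show "p \<ge> 3" by fact
  show "\<forall>k\<in>{1..p}. (if k = 1 \<or> k = p then 1 else 2::nat) \<le> 3" by simp
  show "\<forall>i\<in>{1..p}. \<forall>k\<in>{1..p}. k \<noteq> i \<longrightarrow> fC p i k < (if k = 1 \<or> k = p then 1 else 2)" unfolding fC_def by simp
  show "\<forall>k\<in>{1..p}. \<forall>v<(if k = 1 \<or> k = p then 1 else 2). \<exists>i\<in>{1..p}. i \<noteq> k \<and> fC p i k = v"
  proof (intro ballI allI impI)
    fix k v assume k: "k \<in> {1..p}" and v: "v < (if k = 1 \<or> k = p then 1 else 2::nat)"
    have "(k = 1 \<or> k = p) \<and> v = 0 \<or> 1 < k \<and> k < p \<and> v = (k + 1) mod 2 \<or> 1 < k \<and> k < p \<and> v = k mod 2"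
      using k v by (cases "k = 1 \<or> k = p") (auto, presburger)
    then show "\<exists>i\<in>{1..p}. i \<noteq> k \<and> fC p i k = v"
    proof (elim disjE)
      assume "(k = 1 \<or> k = p) \<and> v = 0" then show ?thesis using p5 by (intro bexI[of _ 2]) (auto simp: fC_def)
    next
      assume "1 < k \<and> k < p \<and> v = (k + 1) mod 2" then show ?thesis using p5 by (intro bexI[of _ 1]) (auto simp: fC_def)
    next
      assume "1 < k \<and> k < p \<and> v = k mod 2" then show ?thesis using p5 od oddp_mod[OF od, of k]
        by (intro bexI[of _ p]) (auto simp: fC_def)
    qed
  qed
  show "\<forall>i\<in>{1..p}. \<forall>j\<in>{1..p}. i \<noteq> j \<longrightarrow> odd (card {k \<in> {1..p}. k \<noteq> i \<and> k \<noteq> j \<and> fC p i k = fC p j k} + p)"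
  proof (intro ballI impI)
    fix i j assume i: "i \<in> {1..p}" and j: "j \<in> {1..p}" and ij: "i \<noteq> j"
    have b: "\<forall>k. fC p i k \<le> 2" "\<forall>k. fC p j k \<le> 2" unfolding fC_def by auto
    have E: "{k\<in>{1..p}-{i,j}. fC p i k + fC p j k = 2 \<and> fC p i k \<noteq> fC p j k} = {}"
      unfolding fC_def by auto
    have ri: "even (\<Sum>k\<in>{1..p}. fC p i k) \<longleftrightarrow> even (i - 2)" "even (\<Sum>k\<in>{1..p}. fC p j k) \<longleftrightarrow> even (j - 2)"
      using rowC assms i j p5 by auto
    have "even (card {k \<in> {1..p}. k \<noteq> i \<and> k \<noteq> j \<and> fC p i k = fC p j k})"
      unfolding par_pair[OF i j ij b] E using ri od ij i j
      by (cases "i < j") (auto simp: fC_def)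
    then show "odd (card {k \<in> {1..p}. k \<noteq> i \<and> k \<noteq> j \<and> fC p i k = fC p j k} + p)" using od by simp
  qed
qed


definition fD :: "nat \<Rightarrow> nat \<Rightarrow> nat" where
  "fD i k = (of_bool (k < i) + of_bool (odd i) + of_bool (odd i \<and> k = 1) + of_bool (i = 2)) mod 2
            + of_bool (i = 1 \<and> k = 3)"

lemma fD_le: "fD i k \<le> 2" unfolding fD_def by (simp add: of_bool_def)
lemma fD_2: "fD i k = 2 \<longleftrightarrow> i = 1 \<and> k = 3" unfolding fD_def by auto
lemma fD_lt: "\<not> (i = 1 \<and> k = 3) \<Longrightarrow> fD i k < 2" unfolding fD_def by auto

lemma fD_odd: "k \<ge> 1 \<Longrightarrow> odd (fD i k) \<longleftrightarrow> \<not> (i = 1 \<and> k = 3) \<and>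
   ((odd i \<and> ((k = 1 \<and> 1 < i) \<or> (k \<noteq> 1 \<and> i \<le> k))) \<or> (i = 2 \<and> k \<noteq> 1) \<or> (even i \<and> i \<noteq> 2 \<and> k < i))"
  unfolding fD_def by auto

lemma fD_0: "\<not> (i = 1 \<and> k = 3) \<Longrightarrow> fD i k = 0 \<longleftrightarrow> even (fD i k)"
  using fD_lt[of i k] by (cases "fD i k") auto

lemma rowD: assumes "i \<in> {1..p}" "even p" "p \<ge> 3"
  shows "even (\<Sum>k\<in>{1..p}. fD i k) \<longleftrightarrow> even ((i - 1) + of_bool (odd i) + of_bool (i = 1))"
proof -
  let ?g = "\<lambda>k. of_bool (k < i) + of_bool (odd i) + of_bool (odd i \<and> k = 1) + of_bool (i = 2) :: nat"
  have e1: "{1..p} \<inter> {k. k < i} = {1..<i}" using assms by auto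
  have e2: "{1..p} \<inter> {k. odd i \<and> k = 1} = (if odd i then {1} else {})" using assms by auto
  have e3: "{1..p} \<inter> {k. i = 1 \<and> k = 3} = (if i = 1 then {3} else {})" using assms by auto
  have "(\<Sum>k\<in>{1..p}. fD i k) = (\<Sum>k\<in>{1..p}. ?g k mod 2) + of_bool (i = 1)"
  proof -
    have "{1..p} \<inter> {3::nat} = {3}" using assms by auto
    then show ?thesis unfolding fD_def by (simp add: sum.distrib e3)
  qed
  moreover have "(\<Sum>k\<in>{1..p}. ?g k) = (i - 1) + p * of_bool (odd i) + of_bool (odd i) + p * of_bool (i = 2)"
  proof -
    have c1: "card ({Suc 0..p} \<inter> {k. k < i}) = i - 1" using card_lt[of i p] assms by simp
    have c2: "card ({Suc 0..p} \<inter> {Suc 0}) = 1" using assms by (subgoal_tac "{Suc 0..p} \<inter> {Suc 0} = {Suc 0}") auto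
    show ?thesis using assms by (simp add: sum.distrib c1 c2)
  qed
  ultimately show ?thesis using sum_mod2[of ?g "{1..p}"] assms by auto
qed

lemma ED: assumes "p \<ge> 3" "i \<noteq> j"
  shows "card {k\<in>{1..p}-{i,j}. fD i k + fD j k = 2 \<and> fD i k \<noteq> fD j k}
    = (if 3 \<notin> {i,j} \<and> ((i = 1 \<and> fD j 3 = 0) \<or> (j = 1 \<and> fD i 3 = 0)) then 1 else 0)"
proof -
  define Q where "Q = ((i = 1 \<and> fD j 3 = 0) \<or> (j = 1 \<and> fD i 3 = 0))"
  have P: "(fD i k + fD j k = 2 \<and> fD i k \<noteq> fD j k) \<longleftrightarrow> k = 3 \<and> Q" for k
  proof -
    have "(fD i k + fD j k = 2 \<and> fD i k \<noteq> fD j k) \<longleftrightarrow> (fD i k = 2 \<and> fD j k = 0) \<or> (fD j k = 2 \<and> fD i k = 0)"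
      using fD_le[of i k] fD_le[of j k] by linarith
    also have "\<dots> \<longleftrightarrow> k = 3 \<and> Q" unfolding Q_def fD_2 by auto
    finally show ?thesis .
  qed
  have "{k\<in>{1..p}-{i,j}. fD i k + fD j k = 2 \<and> fD i k \<noteq> fD j k} = (if 3 \<notin> {i,j} \<and> Q then {3} else {})"
    unfolding P using assms by auto
  then show ?thesis unfolding Q_def by simp
qed

definition rD :: "nat \<Rightarrow> nat" where "rD i = (i - 1) + of_bool (odd i) + of_bool (i = 1)"

definition ED' :: "nat \<Rightarrow> nat \<Rightarrow> nat" where
  "ED' i j = (if 3 \<notin> {i,j} \<and> ((i = 1 \<and> fD j 3 = 0) \<or> (j = 1 \<and> fD i 3 = 0)) then 1 else 0)"

lemma pairD_lt: assumes "1 \<le> i" "i < j" "even p"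
  shows "odd (p + rD i + fD i i + fD i j + rD j + fD j i + fD j j + ED' i j)"
proof -
  have "i = 1 \<and> j = 2 \<or> i = 1 \<and> j = 3 \<or> i = 1 \<and> j \<ge> 4 \<and> even j \<or> i = 1 \<and> j \<ge> 5 \<and> odd j
     \<or> i = 2 \<and> j = 3 \<or> i = 2 \<and> j \<ge> 4 \<and> even j \<or> i = 2 \<and> j \<ge> 5 \<and> odd j
     \<or> i = 3 \<and> j \<ge> 4 \<and> even j \<or> i = 3 \<and> j \<ge> 5 \<and> odd j
     \<or> i \<ge> 4 \<and> even i \<and> even j \<or> i \<ge> 4 \<and> even i \<and> odd j
     \<or> i \<ge> 4 \<and> odd i \<and> even j \<or> i \<ge> 4 \<and> odd i \<and> odd j"
    using assms by presburger
  then show ?thesis using assms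
    by (elim disjE) (simp_all add: fD_def rD_def ED'_def; presburger?)+
qed

lemma caseD: assumes "p \<ge> 3" "p mod 4 = 2"
  shows "is_core p (\<lambda>i. if i = 3 then 3 else 2) (CC (\<lambda>i. if i = 3 then 3 else 2)) (BB p fD)"
proof (rule core_from_f)
  have p6: "p \<ge> 6" and ev: "even p" using assms by presburger+
  show "p \<ge> 3" by fact
  show "\<forall>k\<in>{1..p}. (if k = 3 then 3 else 2::nat) \<le> 3" by simp
  show "\<forall>i\<in>{1..p}. \<forall>k\<in>{1..p}. k \<noteq> i \<longrightarrow> fD i k < (if k = 3 then 3 else 2)"
  proof (intro ballI impI)
    fix i k assume "i \<in> {1..p}" "k \<in> {1..p}" "k \<noteq> i"
    show "fD i k < (if k = 3 then 3 else 2)"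
    proof (cases "k = 3")
      case True then show ?thesis using fD_le[of i k] by simp
    next
      case False then show ?thesis using fD_lt[of i k] by simp
    qed
  qed
  show "\<forall>k\<in>{1..p}. \<forall>v<(if k = 3 then 3 else 2). \<exists>i\<in>{1..p}. i \<noteq> k \<and> fD i k = v"
  proof (intro ballI allI impI)
    fix k v assume k: "k \<in> {1..p}" and v: "v < (if k = 3 then 3 else 2::nat)"
    have "k = 3 \<and> v = 2 \<or> k = 3 \<and> v = 1 \<or> k = 3 \<and> v = 0 \<or> k = 1 \<and> v = 0 \<or> k = 1 \<and> v = 1
      \<or> k = 2 \<and> v = 1 \<or> k = 2 \<and> v = 0 \<or> k \<ge> 4 \<and> v = 1 \<or> k = 4 \<and> v = 0 \<or> k \<ge> 5 \<and> v = 0"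
      using k v by (cases "k = 3") auto
    then show "\<exists>i\<in>{1..p}. i \<noteq> k \<and> fD i k = v"
    proof (elim disjE)
      assume "k = 3 \<and> v = 2" then show ?thesis using p6 by (intro bexI[of _ 1]) (auto simp: fD_def)
    next
      assume "k = 3 \<and> v = 1" then show ?thesis using p6 by (intro bexI[of _ 2]) (auto simp: fD_def)
    next
      assume "k = 3 \<and> v = 0" then show ?thesis using p6 by (intro bexI[of _ 5]) (auto simp: fD_def)
    next
      assume "k = 1 \<and> v = 0" then show ?thesis using p6 by (intro bexI[of _ 2]) (auto simp: fD_def)
    next
      assume "k = 1 \<and> v = 1" then show ?thesis using p6 by (intro bexI[of _ 3]) (auto simp: fD_def)
    next
      assume "k = 2 \<and> v = 1" then show ?thesis using p6 by (intro bexI[of _ 1]) (auto simp: fD_def)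
    next
      assume "k = 2 \<and> v = 0" then show ?thesis using p6 by (intro bexI[of _ 3]) (auto simp: fD_def)
    next
      assume "k \<ge> 4 \<and> v = 1" then show ?thesis using p6 by (intro bexI[of _ 1]) (auto simp: fD_def)
    next
      assume "k = 4 \<and> v = 0" then show ?thesis using p6 by (intro bexI[of _ 5]) (auto simp: fD_def)
    next
      assume "k \<ge> 5 \<and> v = 0" then show ?thesis using p6 by (intro bexI[of _ 4]) (auto simp: fD_def)
    qed
  qed
  show "\<forall>i\<in>{1..p}. \<forall>j\<in>{1..p}. i \<noteq> j \<longrightarrow> odd (card {k \<in> {1..p}. k \<noteq> i \<and> k \<noteq> j \<and> fD i k = fD j k} + p)"
  proof (intro ballI impI)
    fix i j assume i: "i \<in> {1..p}" and j: "j \<in> {1..p}" and ij: "i \<noteq> j"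
    have b: "\<forall>k. fD i k \<le> 2" "\<forall>k. fD j k \<le> 2" using fD_le by auto
    have ri: "even (\<Sum>k\<in>{1..p}. fD i k) \<longleftrightarrow> even ((i - 1) + of_bool (odd i) + of_bool (i = 1))"
      "even (\<Sum>k\<in>{1..p}. fD j k) \<longleftrightarrow> even ((j - 1) + of_bool (odd j) + of_bool (j = 1))"
      using rowD assms i j ev by auto
    have "odd (card {k \<in> {1..p}. k \<noteq> i \<and> k \<noteq> j \<and> fD i k = fD j k})"
    proof -
      have sym: "ED' j i = ED' i j" unfolding ED'_def by auto
      have o: "odd (p + rD i + fD i i + fD i j + rD j + fD j i + fD j j + ED' i j)"
      proof (cases "i < j")
        case True then show ?thesis using pairD_lt[of i j p] i ev by auto
      next
        case False then have "j < i" using ij by auto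
        then have "odd (p + rD j + fD j j + fD j i + rD i + fD i j + fD i i + ED' j i)"
          using pairD_lt[of j i p] j ev by auto
        then show ?thesis unfolding sym by (simp add: ac_simps)
      qed
      have ri': "even (sum (fD i) {1..p}) \<longleftrightarrow> even (rD i)" "even (sum (fD j) {1..p}) \<longleftrightarrow> even (rD j)"
        using ri unfolding rD_def by auto
      have "\<not> even (p + sum (fD i) {1..p} + fD i i + fD i j + sum (fD j) {1..p} + fD j i + fD j j
      + (if 3 \<notin> {i,j} \<and> ((i = 1 \<and> fD j 3 = 0) \<or> (j = 1 \<and> fD i 3 = 0)) then 1 else 0))"
        using o ri' unfolding ED'_def by (simp only: even_add) auto
      then show ?thesis unfolding par_pair[OF i j ij b] ED[OF assms(1) ij] by simp
    qed
    then show "odd (card {k \<in> {1..p}. k \<noteq> i \<and> k \<noteq> j \<and> fD i k = fD j k} + p)" using ev by simp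
  qed
qed


lemma main_ex:
  fixes l :: nat
  assumes "l \<ge> 3"
  shows "\<exists>x C B. is_core l x C B \<and> (\<Sum>i=1..l. x i) \<le> 2 * l + 1 \<and>
            (\<forall>i\<in>{1..l}. 1 \<le> x i \<and> x i \<le> 3)"
proof -
  have "l mod 4 = 0 \<or> l mod 4 = 1 \<or> l mod 4 = 2 \<or> l mod 4 = 3" by presburger
  then show ?thesis
  proof (elim disjE)
    assume h: "l mod 4 = 0"
    let ?x = "\<lambda>i::nat. if i = l then 1 else 2::nat"
    have "(\<Sum>i=1..l. ?x i) \<le> (\<Sum>i=1..l. 2)" by (rule sum_mono) simp
    then have "(\<Sum>i=1..l. ?x i) \<le> 2 * l + 1" by simp
    then show ?thesis using caseB[OF assms h] by (intro exI[of _ ?x]) auto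
  next
    assume h: "l mod 4 = 1"
    let ?x = "\<lambda>i::nat. if i = 1 \<or> i = l then 1 else 2::nat"
    have "(\<Sum>i=1..l. ?x i) \<le> (\<Sum>i=1..l. 2)" by (rule sum_mono) simp
    then have "(\<Sum>i=1..l. ?x i) \<le> 2 * l + 1" by simp
    then show ?thesis using caseC[OF assms h] by (intro exI[of _ ?x]) auto
  next
    assume h: "l mod 4 = 2"
    let ?x = "\<lambda>i::nat. if i = 3 then 3 else 2::nat"
    have "(\<Sum>i=1..l. ?x i) = ?x 3 + (\<Sum>i\<in>{1..l}-{3}. ?x i)"
      using assms by (intro sum.remove) auto
    also have "(\<Sum>i\<in>{1..l}-{3}. ?x i) = (\<Sum>i\<in>{1..l}-{3}. 2)" by (rule sum.cong) auto
    also have "\<dots> = 2 * (l - 1)" using assms by simp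
    finally have "(\<Sum>i=1..l. ?x i) \<le> 2 * l + 1" using assms by simp
    then show ?thesis using caseD[OF assms h] by (intro exI[of _ ?x]) auto
  next
    assume h: "l mod 4 = 3"
    have "odd l" using h by presburger
    then show ?thesis using caseA[OF assms] by (intro exI[of _ "\<lambda>i. 2"]) auto
  qed
qed

theorem mainTheorem10:
  fixes l :: nat
  assumes "l \<ge> 3"
  shows "(\<exists>x C B. is_core l x C B \<and> (\<Sum>i=1..l. x i) \<le> 2 * l + 1 \<and>
            (\<forall>i\<in>{1..l}. 1 \<le> x i \<and> x i \<le> 3))
    \<and> (l mod 4 = 1 \<longrightarrow> (\<exists>C B. is_core l (\<lambda>i. if i = 1 \<or> i = l then 1 else 2) C B))
    \<and> (l mod 4 = 0 \<longrightarrow> (\<exists>C B. is_core l (\<lambda>i. if i = l then 1 else 2) C B))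
    \<and> (l mod 4 = 3 \<longrightarrow> (\<exists>C B. is_core l (\<lambda>i. 2) C B))
    \<and> (l mod 4 = 2 \<longrightarrow> (\<exists>C B. is_core l (\<lambda>i. if i = 3 then 3 else 2) C B))"
proof (intro conjI impI)
  show "\<exists>x C B. is_core l x C B \<and> (\<Sum>i=1..l. x i) \<le> 2 * l + 1 \<and>
            (\<forall>i\<in>{1..l}. 1 \<le> x i \<and> x i \<le> 3)" using main_ex[OF assms] .
  show "\<exists>C B. is_core l (\<lambda>i. if i = 1 \<or> i = l then 1 else 2) C B" if "l mod 4 = 1"
    using caseC[OF assms that] by blast
  show "\<exists>C B. is_core l (\<lambda>i. if i = l then 1 else 2) C B" if "l mod 4 = 0"
    using caseB[OF assms that] by blast
  show "\<exists>C B. is_core l (\<lambda>i. 2) C B" if "l mod 4 = 3"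
  proof -
    have "odd l" using that by presburger
    then show ?thesis using caseA[OF assms] by blast
  qed
  show "\<exists>C B. is_core l (\<lambda>i. if i = 3 then 3 else 2) C B" if "l mod 4 = 2"
    using caseD[OF assms that] by blast
qed

end
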